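(* Every generalized approval-based committee scoring (GABCS) rule is a linear mapping.
   Context: Let $\mathcal A=[m]=\{1,\dots,m\}$ be the set of alternatives and $k\le m$; let $\mathcal A_k$ denote the set of all $k$-element subsets ($k$-committees) of $\mathcal A$. The preference space is $\mathcal E=2^{\mathcal A}$ (approval ballots). A profile is a finite nonempty sequence $P=(A_1,\dots,A_n)\in\mathcal E^n$, $n\ge1$; $\mathcal E^*=\bigcup_{n\ge1}\mathcal E^n$. The histogram $\mathrm{Hist}(P)\in\mathbb Z_{\ge0}^{|\mathcal E|}$ records for each $A\in\mathcal E$ the number of indices $j$ with $A_j=A$. A mapping $f:\mathcal E^*\to\mathcal D$ (with $\mathcal E,\mathcal D$ finite) is linear if there exist finitely many vectors $\vec h_1,\dots,\vec h_K\in\mathbb R^{|\mathcal E|}$ and a function $g:\{+,-,0\}^K\to\mathcal D$ such that for every profile $P$, $f(P)=g(\sigma_1,\dots,\sigma_K)$, where $\sigma_t$ is $+$, $-$ or $0$ according as $\mathrm{Hist}(P)\cdot\vec h_t$ is $>0$, $<0$ or $=0$. A GABCS rule is specified by a function $\mathbf s:2^{\mathcal A}\times\mathcal A_k\to\mathbb R$ and maps a profile $P$ to the set $\arg\max_{W\in\mathcal A_k}\sum_{j=1}^n\mathbf s(A_j,W)$ (a nonempty subset of $\mathcal A_k$); the decision space is $\mathcal D=2^{\mathcal A_k}$. *)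

theory Defs
  imports Complex_Main
begin

datatype sign = Pos | Neg | Zero

definition sign_of :: "real \<Rightarrow> sign" where
  "sign_of x = (if x > 0 then Pos else if x < 0 then Neg else Zero)"

definition profiles :: "'e set \<Rightarrow> 'e list set" where
  "profiles E = {P. P \<noteq> [] \<and> set P \<subseteq> E}"

definition Hist :: "'e list \<Rightarrow> 'e \<Rightarrow> nat" where
  "Hist P A = count_list P A"

definition hist_dot :: "'e set \<Rightarrow> 'e list \<Rightarrow> ('e \<Rightarrow> real) \<Rightarrow> real" where
  "hist_dot E P h = (\<Sum>A\<in>E. real (Hist P A) * h A)"

definition linear_mapping :: "'e set \<Rightarrow> ('e list \<Rightarrow> 'd) \<Rightarrow> bool" where
  "linear_mapping E f \<longleftrightarrow>
     (\<exists>(K::nat) (h :: nat \<Rightarrow> 'e \<Rightarrow> real) (g :: sign list \<Rightarrow> 'd).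
        \<forall>P \<in> profiles E. f P = g (map (\<lambda>t. sign_of (hist_dot E P (h t))) [0..<K]))"

definition committees :: "nat \<Rightarrow> nat \<Rightarrow> nat set set" where
  "committees m k = {W. W \<subseteq> {1..m} \<and> card W = k}"

definition gabcs :: "nat \<Rightarrow> nat \<Rightarrow> (nat set \<Rightarrow> nat set \<Rightarrow> real) \<Rightarrow> nat set list \<Rightarrow> nat set set" where
  "gabcs m k s P = {W \<in> committees m k.
      \<forall>W' \<in> committees m k. (\<Sum>j<length P. s (P ! j) W') \<le> (\<Sum>j<length P. s (P ! j) W)}"

end

theory Submission
  imports Defs
begin

lemma sum_hist:
  fixes f :: "'e \<Rightarrow> real"
  assumes "finite E" "set P \<subseteq> E"
  shows "(\<Sum>j<length P. f (P ! j)) = (\<Sum>A\<in>E. real (Hist P A) * f A)"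
proof -
  have "(\<Sum>j<length P. f (P ! j)) = sum_list (map f P)"
    by (simp add: sum_list_sum_nth atLeast0LessThan)
  also have "\<dots> = (\<Sum>A\<in>E. real (Hist P A) * f A)"
    using assms(2)
  proof (induction P)
    case Nil
    then show ?case by (simp add: Hist_def)
  next
    case (Cons x P)
    have "(\<Sum>A\<in>E. real (Hist (x#P) A) * f A) =
        (\<Sum>A\<in>E. (if x = A then f A else 0) + real (Hist P A) * f A)"
      by (rule sum.cong) (auto simp: Hist_def algebra_simps)
    also have "\<dots> = f x + (\<Sum>A\<in>E. real (Hist P A) * f A)"
      using Cons.prems assms(1) by (simp add: sum.distrib)
    finally show ?case using Cons by simp
  qed
  finally show ?thesis .
qed

theorem theorem1:
  fixes m k :: nat and s :: "nat set \<Rightarrow> nat set \<Rightarrow> real"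
  assumes "k \<le> m"
  shows "linear_mapping (Pow {1..m}) (gabcs m k s)"
proof -
  let ?C = "committees m k"
  have finC: "finite (?C \<times> ?C)"
    unfolding committees_def by (auto intro: finite_subset[of _ "Pow {1..m}"])
  obtain L where L: "set L = ?C \<times> ?C" using finite_list[OF finC] by blast
  define h where "h t A = s A (fst (L!t)) - s A (snd (L!t))" for t A
  define g where "g sl = {W \<in> ?C. \<forall>t<length L. fst (L!t) = W \<longrightarrow> sl!t \<noteq> Neg}" for sl
  show ?thesis unfolding linear_mapping_def
  proof (intro exI ballI)
    fix P assume P: "P \<in> profiles (Pow {1..m})"
    have sub: "set P \<subseteq> Pow {1..m}" using P by (simp add: profiles_def)
    have key: "hist_dot (Pow {1..m}) P (h t) =
       (\<Sum>j<length P. s (P ! j) (fst (L!t))) - (\<Sum>j<length P. s (P ! j) (snd (L!t)))" for t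
      unfolding hist_dot_def h_def right_diff_distrib sum_subtractf
      using sum_hist[OF _ sub, of "\<lambda>A. s A (fst (L!t))"] sum_hist[OF _ sub, of "\<lambda>A. s A (snd (L!t))"]
      by simp
    show "gabcs m k s P = g (map (\<lambda>t. sign_of (hist_dot (Pow {1..m}) P (h t))) [0..<length L])"
    proof (rule set_eqI)
      fix W
      show "W \<in> gabcs m k s P \<longleftrightarrow> W \<in> g (map (\<lambda>t. sign_of (hist_dot (Pow {1..m}) P (h t))) [0..<length L])"
      proof
        assume W: "W \<in> gabcs m k s P"
        show "W \<in> g (map (\<lambda>t. sign_of (hist_dot (Pow {1..m}) P (h t))) [0..<length L])"
          unfolding g_def
        proof (intro CollectI conjI allI impI)
          show "W \<in> ?C" using W by (simp add: gabcs_def)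
          fix t assume t: "t < length L" "fst (L!t) = W"
          have "L!t \<in> ?C \<times> ?C" using t L nth_mem by blast
          hence "snd (L!t) \<in> ?C" by auto
          with W t have "(\<Sum>j<length P. s (P ! j) (snd (L!t))) \<le> (\<Sum>j<length P. s (P ! j) (fst (L!t)))"
            unfolding gabcs_def by blast
          hence "hist_dot (Pow {1..m}) P (h t) \<ge> 0" unfolding key by linarith
          hence "sign_of (hist_dot (Pow {1..m}) P (h t)) \<noteq> Neg" unfolding sign_of_def by simp
          thus "map (\<lambda>t. sign_of (hist_dot (Pow {1..m}) P (h t))) [0..<length L] ! t \<noteq> Neg"
            using t(1) by simp
        qed
      next
        assume W: "W \<in> g (map (\<lambda>t. sign_of (hist_dot (Pow {1..m}) P (h t))) [0..<length L])"
        hence WC: "W \<in> ?C" by (simp add: g_def)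
        show "W \<in> gabcs m k s P" unfolding gabcs_def
        proof (intro CollectI conjI ballI)
          show "W \<in> ?C" by fact
          fix W' assume W': "W' \<in> ?C"
          have "(W, W') \<in> set L" using L WC W' by auto
          then obtain t where t: "t < length L" "L!t = (W, W')" by (auto simp: in_set_conv_nth)
          with W have "map (\<lambda>t. sign_of (hist_dot (Pow {1..m}) P (h t))) [0..<length L] ! t \<noteq> Neg"
            unfolding g_def by auto
          hence "sign_of (hist_dot (Pow {1..m}) P (h t)) \<noteq> Neg" using t(1) by simp
          hence "\<not> hist_dot (Pow {1..m}) P (h t) < 0" unfolding sign_of_def by (auto split: if_splits)
          hence "\<not> (\<Sum>j<length P. s (P ! j) (fst (L!t))) - (\<Sum>j<length P. s (P ! j) (snd (L!t))) < 0"
            unfolding key .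
          thus "(\<Sum>j<length P. s (P ! j) W') \<le> (\<Sum>j<length P. s (P ! j) W)"
            using t(2) by simp
        qed
      qed
    qed
  qed
qed

end
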